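(* Let $F$ be a ternary quartic form over $\mathbb{C}$ (homogeneous of degree $4$ in $x=(x_0,x_1,x_2)$) with zero scheme $C\subseteq\mathbb{P}^2$. Then $C$ consists of two (possibly coincident) double lines, i.e. $F=(L_1L_2)^2$ for some linear forms $L_1,L_2$, if and only if all of the following five concomitants vanish on $F$: $$\alpha_x^2\beta_x^3\gamma_x(\alpha\gamma u)^2(\beta\gamma u),\quad \alpha_x^2\beta_x^2\gamma_x^2(\alpha\beta\gamma)^2,\quad \alpha_x^2\beta_x(\beta\gamma u)^2(\alpha\gamma u)(\alpha\beta\gamma),$$ $$\alpha_x\beta_x(\alpha\gamma u)(\beta\gamma u)(\alpha\beta\gamma)^2,\quad (\alpha\beta\gamma)^4.$$
   Context: Symbolic notation: $\alpha=(\alpha_0,\alpha_1,\alpha_2)$, $\beta$, $\gamma$ are triples of auxiliary variables, $u=(u_0,u_1,u_2)$ is a triple of (dual) variables, $\alpha_x=\alpha_0x_0+\alpha_1x_1+\alpha_2x_2$ (similarly $\beta_x,\gamma_x$), $(\alpha\beta\gamma)$ is the determinant of the $3\times3$ matrix with rows $\alpha,\beta,\gamma$, and $(\alpha\gamma u)$ etc. are defined likewise. Each expression above is homogeneous of degree $4$ in each of $\alpha,\beta,\gamma$; its value on $F$ is the polynomial in $x,u$ obtained by applying the differential operator $(1/4!)^3\,F(\partial_{\alpha_0},\partial_{\alpha_1},\partial_{\alpha_2})F(\partial_{\beta_0},\partial_{\beta_1},\partial_{\beta_2})F(\partial_{\gamma_0},\partial_{\gamma_1},\partial_{\gamma_2})$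 to it. "Vanishes on $F$" means this polynomial is identically zero. *)

theory Defs
  imports Complex_Main
begin

(* A ternary quartic form F over the complex numbers is given by its coefficients:
   F a b c is the coefficient of x0^a x1^b x2^c (only a+b+c = 4 is used).
   Vectors x = (x0,x1,x2), u = (u0,u1,u2) are functions nat => complex, read at 0,1,2. *)

definition quartic_eval :: "(nat \<Rightarrow> nat \<Rightarrow> nat \<Rightarrow> complex) \<Rightarrow> (nat \<Rightarrow> complex) \<Rightarrow> complex" where
  "quartic_eval F x = (\<Sum>a\<le>4. \<Sum>b\<le>4 - a. F a b (4 - a - b) * x 0 ^ a * x 1 ^ b * x 2 ^ (4 - a - b))"

definition lin :: "(nat \<Rightarrow> complex) \<Rightarrow> (nat \<Rightarrow> complex) \<Rightarrow> complex" where
  "lin L x = (\<Sum>i<3. L i * x i)"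

(* Levi-Civita symbol: determinant of the matrix with rows e_i, e_j, e_k *)
definition eps :: "nat \<Rightarrow> nat \<Rightarrow> nat \<Rightarrow> complex" where
  "eps i j k =
     (if (i,j,k) \<in> {(0,1,2),(1,2,0),(2,0,1)} then 1
      else if (i,j,k) \<in> {(0,2,1),(2,1,0),(1,0,2)} then -1 else 0)"

(* (p q u) with p = e_i, q = e_k:  sum_m eps i k m * u_m *)
definition dU :: "(nat \<Rightarrow> complex) \<Rightarrow> nat \<Rightarrow> nat \<Rightarrow> complex" where
  "dU u i k = (\<Sum>m<3. eps i k m * u m)"

definition idx4 :: "nat list set" where
  "idx4 = {xs. length xs = 4 \<and> set xs \<subseteq> {0..<3}}"

(* Value of (1/4!) F(d_alpha0, d_alpha1, d_alpha2) on the monomial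
   alpha_{i0} alpha_{i1} alpha_{i2} alpha_{i3}: if this monomial is alpha^k
   (k = exponent vector), the result is F_k * k0! k1! k2! / 4!. *)
definition symb :: "(nat \<Rightarrow> nat \<Rightarrow> nat \<Rightarrow> complex) \<Rightarrow> nat list \<Rightarrow> complex" where
  "symb F is =
     F (count_list is 0) (count_list is 1) (count_list is 2)
       * of_nat (fact (count_list is 0) * fact (count_list is 1) * fact (count_list is 2))
       / of_nat (fact 4)"

(* Symbolic evaluation: an expression of degree 4 in each of alpha, beta, gamma, written as
   sum over a,b,c in idx4 of  P a b c * alpha_{a!0}..alpha_{a!3} beta_{b!0}..beta_{b!3} gamma_{c!0}..gamma_{c!3},
   is sent (by linearity of the operator (1/4!)^3 F(d_alpha)F(d_beta)F(d_gamma)) to the value below. *)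
definition symb_eval :: "(nat \<Rightarrow> nat \<Rightarrow> nat \<Rightarrow> complex) \<Rightarrow> (nat list \<Rightarrow> nat list \<Rightarrow> nat list \<Rightarrow> complex) \<Rightarrow> complex" where
  "symb_eval F P = (\<Sum>a\<in>idx4. \<Sum>b\<in>idx4. \<Sum>c\<in>idx4. P a b c * symb F a * symb F b * symb F c)"

(* alpha_x^2 beta_x^3 gamma_x (alpha gamma u)^2 (beta gamma u) *)
definition conc1 :: "(nat \<Rightarrow> nat \<Rightarrow> nat \<Rightarrow> complex) \<Rightarrow> (nat \<Rightarrow> complex) \<Rightarrow> (nat \<Rightarrow> complex) \<Rightarrow> complex" where
  "conc1 F x u = symb_eval F (\<lambda>a b c.
     x (a!0) * x (a!1) * x (b!0) * x (b!1) * x (b!2) * x (c!0)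
     * dU u (a!2) (c!1) * dU u (a!3) (c!2) * dU u (b!3) (c!3))"

(* alpha_x^2 beta_x^2 gamma_x^2 (alpha beta gamma)^2 *)
definition conc2 :: "(nat \<Rightarrow> nat \<Rightarrow> nat \<Rightarrow> complex) \<Rightarrow> (nat \<Rightarrow> complex) \<Rightarrow> (nat \<Rightarrow> complex) \<Rightarrow> complex" where
  "conc2 F x u = symb_eval F (\<lambda>a b c.
     x (a!0) * x (a!1) * x (b!0) * x (b!1) * x (c!0) * x (c!1)
     * eps (a!2) (b!2) (c!2) * eps (a!3) (b!3) (c!3))"

(* alpha_x^2 beta_x (beta gamma u)^2 (alpha gamma u) (alpha beta gamma) *)
definition conc3 :: "(nat \<Rightarrow> nat \<Rightarrow> nat \<Rightarrow> complex) \<Rightarrow> (nat \<Rightarrow> complex) \<Rightarrow> (nat \<Rightarrow> complex) \<Rightarrow> complex" where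
  "conc3 F x u = symb_eval F (\<lambda>a b c.
     x (a!0) * x (a!1) * x (b!0)
     * dU u (b!1) (c!0) * dU u (b!2) (c!1) * dU u (a!2) (c!2)
     * eps (a!3) (b!3) (c!3))"

(* alpha_x beta_x (alpha gamma u) (beta gamma u) (alpha beta gamma)^2 *)
definition conc4 :: "(nat \<Rightarrow> nat \<Rightarrow> nat \<Rightarrow> complex) \<Rightarrow> (nat \<Rightarrow> complex) \<Rightarrow> (nat \<Rightarrow> complex) \<Rightarrow> complex" where
  "conc4 F x u = symb_eval F (\<lambda>a b c.
     x (a!0) * x (b!0) * dU u (a!1) (c!0) * dU u (b!1) (c!1)
     * eps (a!2) (b!2) (c!2) * eps (a!3) (b!3) (c!3))"

(* (alpha beta gamma)^4 *)
definition conc5 :: "(nat \<Rightarrow> nat \<Rightarrow> nat \<Rightarrow> complex) \<Rightarrow> complex" where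
  "conc5 F = symb_eval F (\<lambda>a b c.
     eps (a!0) (b!0) (c!0) * eps (a!1) (b!1) (c!1) * eps (a!2) (b!2) (c!2) * eps (a!3) (b!3) (c!3))"

end

theory Submission
  imports Defs
begin

lemma sum3: "(\<Sum>i<3. f i) = f 0 + f 1 + f (2::nat)" for f :: "nat \<Rightarrow> 'a::comm_monoid_add"
  by (simp add: numeral_3_eq_3 numeral_2_eq_2 add_ac)

lemma idx4_eq: "idx4 = (\<lambda>(i,j,k,l). [i,j,k,l]) ` ({..<3} \<times> {..<3} \<times> {..<3} \<times> {..<(3::nat)})"
proof (rule set_eqI, rule iffI)
  fix a assume "a \<in> idx4"
  then have "length a = 4" "set a \<subseteq> {0..<3}" by (auto simp: idx4_def)
  then obtain i j k l where "a = [i,j,k,l]"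
    by (cases a; cases "tl a"; cases "tl (tl a)"; cases "tl (tl (tl a))"; auto)
  with \<open>set a \<subseteq> _\<close> show "a \<in> (\<lambda>(i,j,k,l). [i,j,k,l]) ` ({..<3} \<times> {..<3} \<times> {..<3} \<times> {..<3})"
    by (auto intro!: image_eqI[where x="(i,j,k,l)"])
next
  fix a assume "a \<in> (\<lambda>(i,j,k,l). [i,j,k,l]) ` ({..<3} \<times> {..<3} \<times> {..<3} \<times> {..<(3::nat)})"
  then show "a \<in> idx4" by (auto simp: idx4_def)
qed

lemma idx4_sum: "(\<Sum>a\<in>idx4. g a) = (\<Sum>i<3. \<Sum>j<3. \<Sum>k<3. \<Sum>l<3. g [i,j,k,l])"
proof -
  have inj: "inj_on (\<lambda>(i,j,k,l). [i,j,k,l::nat]) ({..<3} \<times> {..<3} \<times> {..<3} \<times> {..<(3::nat)})"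
    by (auto simp: inj_on_def)
  show ?thesis
    unfolding idx4_eq sum.reindex[OF inj]
    by (simp add: sum.cartesian_product')
qed

lemma sum4prod: "(\<Sum>a\<in>idx4. f0 (a!0) * f1 (a!1) * f2 (a!2) * f3 (a!3)) = sum f0 {..<3} * sum f1 {..<3} * sum f2 {..<3} * (sum f3 {..<3} :: complex)"
  by (simp add: idx4_sum sum3 algebra_simps)

lemma sum4c: "(\<Sum>a\<in>idx4. K * (f0 (a!0) * f1 (a!1) * f2 (a!2) * f3 (a!3))) = K * (sum f0 {..<3} * sum f1 {..<3} * sum f2 {..<3} * (sum f3 {..<3} :: complex))"
  by (simp only: sum_distrib_left[symmetric] sum4prod)

lemma stage: "(\<And>a. a \<in> idx4 \<Longrightarrow> g a = K * (f0 (a!0) * f1 (a!1) * f2 (a!2) * f3 (a!3))) \<Longrightarrow> sum g idx4 = K * (sum f0 {..<3} * sum f1 {..<3} * sum f2 {..<3} * (sum f3 {..<3} :: complex))"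
proof -
  assume h: "\<And>a. a \<in> idx4 \<Longrightarrow> g a = K * (f0 (a!0) * f1 (a!1) * f2 (a!2) * f3 (a!3))"
  have "sum g idx4 = (\<Sum>a\<in>idx4. K * (f0 (a!0) * f1 (a!1) * f2 (a!2) * f3 (a!3)))"
    by (rule sum.cong[OF refl h])
  then show ?thesis by (simp only: sum4c)
qed

definition R :: "(nat \<Rightarrow> nat \<Rightarrow> complex) \<Rightarrow> nat list \<Rightarrow> complex" where
  "R V a = V 0 (a!0) * V 1 (a!1) * V 2 (a!2) * V 3 (a!3)"
definition dot :: "(nat \<Rightarrow> complex) \<Rightarrow> (nat \<Rightarrow> complex) \<Rightarrow> complex" where
  "dot v x = (\<Sum>i<3. v i * x i)"
definition Dd :: "(nat \<Rightarrow> complex) \<Rightarrow> (nat \<Rightarrow> complex) \<Rightarrow> (nat \<Rightarrow> complex) \<Rightarrow> complex" where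
  "Dd u v w = (\<Sum>i<3. v i * (\<Sum>k<3. dU u i k * w k))"
definition Ee :: "(nat \<Rightarrow> complex) \<Rightarrow> (nat \<Rightarrow> complex) \<Rightarrow> (nat \<Rightarrow> complex) \<Rightarrow> complex" where
  "Ee v w z = (\<Sum>i<3. v i * (\<Sum>j<3. w j * (\<Sum>k<3. eps i j k * z k)))"

lemma K1: "(\<Sum>a\<in>idx4. \<Sum>b\<in>idx4. \<Sum>c\<in>idx4. (x (a!0) * x (a!1) * x (b!0) * x (b!1) * x (b!2) * x (c!0)
     * dU u (a!2) (c!1) * dU u (a!3) (c!2) * dU u (b!3) (c!3)) * R V a * R W b * R Z c)
  = dot (V 0) x * dot (V 1) x * dot (W 0) x * dot (W 1) x * dot (W 2) x * dot (Z 0) x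
    * Dd u (V 2) (Z 1) * Dd u (V 3) (Z 2) * Dd u (W 3) (Z 3)"
proof -
  define h where "h m j = (\<Sum>i<3. dU u j i * Z m i)" for m j
  have sc: "(\<Sum>c\<in>idx4. (x (a!0) * x (a!1) * x (b!0) * x (b!1) * x (b!2) * x (c!0)
     * dU u (a!2) (c!1) * dU u (a!3) (c!2) * dU u (b!3) (c!3)) * R V a * R W b * R Z c)
    = (x (a!0) * x (a!1) * x (b!0) * x (b!1) * x (b!2) * R V a * R W b) * (dot (Z 0) x * h 1 (a!2) * h 2 (a!3) * h 3 (b!3))" for a b
    by (rule trans[OF stage[of _ "x (a!0) * x (a!1) * x (b!0) * x (b!1) * x (b!2) * R V a * R W b"
        "\<lambda>i. Z 0 i * x i" "\<lambda>i. dU u (a!2) i * Z 1 i" "\<lambda>i. dU u (a!3) i * Z 2 i" "\<lambda>i. dU u (b!3) i * Z 3 i"]])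
       (simp_all add: R_def dot_def h_def mult_ac)
  have sb: "(\<Sum>b\<in>idx4. (x (a!0) * x (a!1) * x (b!0) * x (b!1) * x (b!2) * R V a * R W b) * (dot (Z 0) x * h 1 (a!2) * h 2 (a!3) * h 3 (b!3)))
    = (x (a!0) * x (a!1) * R V a * dot (Z 0) x * h 1 (a!2) * h 2 (a!3)) * (dot (W 0) x * dot (W 1) x * dot (W 2) x * (\<Sum>j<3. W 3 j * h 3 j))" for a
    by (rule trans[OF stage[of _ "x (a!0) * x (a!1) * R V a * dot (Z 0) x * h 1 (a!2) * h 2 (a!3)"
        "\<lambda>i. W 0 i * x i" "\<lambda>i. W 1 i * x i" "\<lambda>i. W 2 i * x i" "\<lambda>i. W 3 i * h 3 i"]])
       (simp_all add: R_def dot_def h_def mult_ac)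
  have sa: "(\<Sum>a\<in>idx4. (x (a!0) * x (a!1) * R V a * dot (Z 0) x * h 1 (a!2) * h 2 (a!3)) * (dot (W 0) x * dot (W 1) x * dot (W 2) x * (\<Sum>j<3. W 3 j * h 3 j)))
    = (dot (Z 0) x * dot (W 0) x * dot (W 1) x * dot (W 2) x * (\<Sum>j<3. W 3 j * h 3 j)) * (dot (V 0) x * dot (V 1) x * (\<Sum>j<3. V 2 j * h 1 j) * (\<Sum>j<3. V 3 j * h 2 j))"
    by (rule trans[OF stage[of _ "dot (Z 0) x * dot (W 0) x * dot (W 1) x * dot (W 2) x * (\<Sum>j<3. W 3 j * h 3 j)"
        "\<lambda>i. V 0 i * x i" "\<lambda>i. V 1 i * x i" "\<lambda>i. V 2 i * h 1 i" "\<lambda>i. V 3 i * h 2 i"]])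
       (simp_all add: R_def dot_def h_def mult_ac)
  show ?thesis
    unfolding sc sb sa by (simp add: Dd_def h_def mult_ac)
qed

lemma K2: "(\<Sum>a\<in>idx4. \<Sum>b\<in>idx4. \<Sum>c\<in>idx4. (x (a!0) * x (a!1) * x (b!0) * x (b!1) * x (c!0) * x (c!1) * eps (a!2) (b!2) (c!2) * eps (a!3) (b!3) (c!3)) * R V a * R W b * R Z c)
  = dot (V 0) x * dot (V 1) x * dot (W 0) x * dot (W 1) x * dot (Z 0) x * dot (Z 1) x * Ee (V 2) (W 2) (Z 2) * Ee (V 3) (W 3) (Z 3)"
proof -
  define h where "h m j = (\<Sum>i<3. dU u j i * Z m i)" for m j
  define e where "e m i j = (\<Sum>k<3. eps i j k * Z m k)" for m i j
  define ee where "ee m i = (\<Sum>j<3. W m j * e m i j)" for m i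
  have sc: "(\<Sum>c\<in>idx4. (x (a!0) * x (a!1) * x (b!0) * x (b!1) * x (c!0) * x (c!1) * eps (a!2) (b!2) (c!2) * eps (a!3) (b!3) (c!3)) * R V a * R W b * R Z c) = (x (a!0) * x (a!1) * x (b!0) * x (b!1) * R V a * R W b) * (dot (Z 0) x * dot (Z 1) x * e 2 (a!2) (b!2) * e 3 (a!3) (b!3))" for a b
    by (rule trans[OF stage[of _ "x (a!0) * x (a!1) * x (b!0) * x (b!1) * R V a * R W b" "\<lambda>k. Z 0 k * x k" "\<lambda>k. Z 1 k * x k" "\<lambda>k. eps (a!2) (b!2) k * Z 2 k" "\<lambda>k. eps (a!3) (b!3) k * Z 3 k"]])
       (simp_all add: R_def dot_def h_def e_def ee_def mult_ac)
  have sb: "(\<Sum>b\<in>idx4. (x (a!0) * x (a!1) * x (b!0) * x (b!1) * R V a * R W b) * (dot (Z 0) x * dot (Z 1) x * e 2 (a!2) (b!2) * e 3 (a!3) (b!3))) = (x (a!0) * x (a!1) * R V a * dot (Z 0) x * dot (Z 1) x) * (dot (W 0) x * dot (W 1) x * ee 2 (a!2) * ee 3 (a!3))" for a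
    by (rule trans[OF stage[of _ "x (a!0) * x (a!1) * R V a * dot (Z 0) x * dot (Z 1) x" "\<lambda>j. W 0 j * x j" "\<lambda>j. W 1 j * x j" "\<lambda>j. W 2 j * e 2 (a!2) j" "\<lambda>j. W 3 j * e 3 (a!3) j"]])
       (simp_all add: R_def dot_def h_def e_def ee_def mult_ac)
  have sa: "(\<Sum>a\<in>idx4. (x (a!0) * x (a!1) * R V a * dot (Z 0) x * dot (Z 1) x) * (dot (W 0) x * dot (W 1) x * ee 2 (a!2) * ee 3 (a!3))) = (dot (Z 0) x * dot (Z 1) x * dot (W 0) x * dot (W 1) x) * (dot (V 0) x * dot (V 1) x * (\<Sum>i<3. V 2 i * ee 2 i) * (\<Sum>i<3. V 3 i * ee 3 i))"
    by (rule trans[OF stage[of _ "dot (Z 0) x * dot (Z 1) x * dot (W 0) x * dot (W 1) x" "\<lambda>i. V 0 i * x i" "\<lambda>i. V 1 i * x i" "\<lambda>i. V 2 i * ee 2 i" "\<lambda>i. V 3 i * ee 3 i"]])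
       (simp_all add: R_def dot_def h_def e_def ee_def mult_ac)
  show ?thesis
    unfolding sc sb sa by (simp add: Dd_def Ee_def dot_def h_def e_def ee_def mult_ac)
qed

lemma K3: "(\<Sum>a\<in>idx4. \<Sum>b\<in>idx4. \<Sum>c\<in>idx4. (x (a!0) * x (a!1) * x (b!0) * dU u (b!1) (c!0) * dU u (b!2) (c!1) * dU u (a!2) (c!2) * eps (a!3) (b!3) (c!3)) * R V a * R W b * R Z c)
  = dot (V 0) x * dot (V 1) x * dot (W 0) x * Dd u (W 1) (Z 0) * Dd u (W 2) (Z 1) * Dd u (V 2) (Z 2) * Ee (V 3) (W 3) (Z 3)"
proof -
  define h where "h m j = (\<Sum>i<3. dU u j i * Z m i)" for m j
  define e where "e m i j = (\<Sum>k<3. eps i j k * Z m k)" for m i j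
  define ee where "ee m i = (\<Sum>j<3. W m j * e m i j)" for m i
  have sc: "(\<Sum>c\<in>idx4. (x (a!0) * x (a!1) * x (b!0) * dU u (b!1) (c!0) * dU u (b!2) (c!1) * dU u (a!2) (c!2) * eps (a!3) (b!3) (c!3)) * R V a * R W b * R Z c) = (x (a!0) * x (a!1) * x (b!0) * R V a * R W b) * (h 0 (b!1) * h 1 (b!2) * h 2 (a!2) * e 3 (a!3) (b!3))" for a b
    by (rule trans[OF stage[of _ "x (a!0) * x (a!1) * x (b!0) * R V a * R W b" "\<lambda>k. dU u (b!1) k * Z 0 k" "\<lambda>k. dU u (b!2) k * Z 1 k" "\<lambda>k. dU u (a!2) k * Z 2 k" "\<lambda>k. eps (a!3) (b!3) k * Z 3 k"]])
       (simp_all add: R_def dot_def h_def e_def ee_def mult_ac)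
  have sb: "(\<Sum>b\<in>idx4. (x (a!0) * x (a!1) * x (b!0) * R V a * R W b) * (h 0 (b!1) * h 1 (b!2) * h 2 (a!2) * e 3 (a!3) (b!3))) = (x (a!0) * x (a!1) * R V a * h 2 (a!2)) * (dot (W 0) x * (\<Sum>j<3. W 1 j * h 0 j) * (\<Sum>j<3. W 2 j * h 1 j) * ee 3 (a!3))" for a
    by (rule trans[OF stage[of _ "x (a!0) * x (a!1) * R V a * h 2 (a!2)" "\<lambda>j. W 0 j * x j" "\<lambda>j. W 1 j * h 0 j" "\<lambda>j. W 2 j * h 1 j" "\<lambda>j. W 3 j * e 3 (a!3) j"]])
       (simp_all add: R_def dot_def h_def e_def ee_def mult_ac)
  have sa: "(\<Sum>a\<in>idx4. (x (a!0) * x (a!1) * R V a * h 2 (a!2)) * (dot (W 0) x * (\<Sum>j<3. W 1 j * h 0 j) * (\<Sum>j<3. W 2 j * h 1 j) * ee 3 (a!3))) = (dot (W 0) x * (\<Sum>j<3. W 1 j * h 0 j) * (\<Sum>j<3. W 2 j * h 1 j)) * (dot (V 0) x * dot (V 1) x * (\<Sum>i<3. V 2 i * h 2 i) * (\<Sum>i<3. V 3 i * ee 3 i))"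
    by (rule trans[OF stage[of _ "dot (W 0) x * (\<Sum>j<3. W 1 j * h 0 j) * (\<Sum>j<3. W 2 j * h 1 j)" "\<lambda>i. V 0 i * x i" "\<lambda>i. V 1 i * x i" "\<lambda>i. V 2 i * h 2 i" "\<lambda>i. V 3 i * ee 3 i"]])
       (simp_all add: R_def dot_def h_def e_def ee_def mult_ac)
  show ?thesis
    unfolding sc sb sa by (simp add: Dd_def Ee_def dot_def h_def e_def ee_def mult_ac)
qed

lemma K4: "(\<Sum>a\<in>idx4. \<Sum>b\<in>idx4. \<Sum>c\<in>idx4. (x (a!0) * x (b!0) * dU u (a!1) (c!0) * dU u (b!1) (c!1) * eps (a!2) (b!2) (c!2) * eps (a!3) (b!3) (c!3)) * R V a * R W b * R Z c)
  = dot (V 0) x * dot (W 0) x * Dd u (V 1) (Z 0) * Dd u (W 1) (Z 1) * Ee (V 2) (W 2) (Z 2) * Ee (V 3) (W 3) (Z 3)"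
proof -
  define h where "h m j = (\<Sum>i<3. dU u j i * Z m i)" for m j
  define e where "e m i j = (\<Sum>k<3. eps i j k * Z m k)" for m i j
  define ee where "ee m i = (\<Sum>j<3. W m j * e m i j)" for m i
  have sc: "(\<Sum>c\<in>idx4. (x (a!0) * x (b!0) * dU u (a!1) (c!0) * dU u (b!1) (c!1) * eps (a!2) (b!2) (c!2) * eps (a!3) (b!3) (c!3)) * R V a * R W b * R Z c) = (x (a!0) * x (b!0) * R V a * R W b) * (h 0 (a!1) * h 1 (b!1) * e 2 (a!2) (b!2) * e 3 (a!3) (b!3))" for a b
    by (rule trans[OF stage[of _ "x (a!0) * x (b!0) * R V a * R W b" "\<lambda>k. dU u (a!1) k * Z 0 k" "\<lambda>k. dU u (b!1) k * Z 1 k" "\<lambda>k. eps (a!2) (b!2) k * Z 2 k" "\<lambda>k. eps (a!3) (b!3) k * Z 3 k"]])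
       (simp_all add: R_def dot_def h_def e_def ee_def mult_ac)
  have sb: "(\<Sum>b\<in>idx4. (x (a!0) * x (b!0) * R V a * R W b) * (h 0 (a!1) * h 1 (b!1) * e 2 (a!2) (b!2) * e 3 (a!3) (b!3))) = (x (a!0) * R V a * h 0 (a!1)) * (dot (W 0) x * (\<Sum>j<3. W 1 j * h 1 j) * ee 2 (a!2) * ee 3 (a!3))" for a
    by (rule trans[OF stage[of _ "x (a!0) * R V a * h 0 (a!1)" "\<lambda>j. W 0 j * x j" "\<lambda>j. W 1 j * h 1 j" "\<lambda>j. W 2 j * e 2 (a!2) j" "\<lambda>j. W 3 j * e 3 (a!3) j"]])
       (simp_all add: R_def dot_def h_def e_def ee_def mult_ac)
  have sa: "(\<Sum>a\<in>idx4. (x (a!0) * R V a * h 0 (a!1)) * (dot (W 0) x * (\<Sum>j<3. W 1 j * h 1 j) * ee 2 (a!2) * ee 3 (a!3))) = (dot (W 0) x * (\<Sum>j<3. W 1 j * h 1 j)) * (dot (V 0) x * (\<Sum>i<3. V 1 i * h 0 i) * (\<Sum>i<3. V 2 i * ee 2 i) * (\<Sum>i<3. V 3 i * ee 3 i))"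
    by (rule trans[OF stage[of _ "dot (W 0) x * (\<Sum>j<3. W 1 j * h 1 j)" "\<lambda>i. V 0 i * x i" "\<lambda>i. V 1 i * h 0 i" "\<lambda>i. V 2 i * ee 2 i" "\<lambda>i. V 3 i * ee 3 i"]])
       (simp_all add: R_def dot_def h_def e_def ee_def mult_ac)
  show ?thesis
    unfolding sc sb sa by (simp add: Dd_def Ee_def dot_def h_def e_def ee_def mult_ac)
qed

lemma K5: "(\<Sum>a\<in>idx4. \<Sum>b\<in>idx4. \<Sum>c\<in>idx4. (eps (a!0) (b!0) (c!0) * eps (a!1) (b!1) (c!1) * eps (a!2) (b!2) (c!2) * eps (a!3) (b!3) (c!3)) * R V a * R W b * R Z c)
  = Ee (V 0) (W 0) (Z 0) * Ee (V 1) (W 1) (Z 1) * Ee (V 2) (W 2) (Z 2) * Ee (V 3) (W 3) (Z 3)"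
proof -
  define h where "h m j = (\<Sum>i<3. dU u j i * Z m i)" for m j
  define e where "e m i j = (\<Sum>k<3. eps i j k * Z m k)" for m i j
  define ee where "ee m i = (\<Sum>j<3. W m j * e m i j)" for m i
  have sc: "(\<Sum>c\<in>idx4. (eps (a!0) (b!0) (c!0) * eps (a!1) (b!1) (c!1) * eps (a!2) (b!2) (c!2) * eps (a!3) (b!3) (c!3)) * R V a * R W b * R Z c) = (R V a * R W b) * (e 0 (a!0) (b!0) * e 1 (a!1) (b!1) * e 2 (a!2) (b!2) * e 3 (a!3) (b!3))" for a b
    by (rule trans[OF stage[of _ "R V a * R W b" "\<lambda>k. eps (a!0) (b!0) k * Z 0 k" "\<lambda>k. eps (a!1) (b!1) k * Z 1 k" "\<lambda>k. eps (a!2) (b!2) k * Z 2 k" "\<lambda>k. eps (a!3) (b!3) k * Z 3 k"]])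
       (simp_all add: R_def dot_def h_def e_def ee_def mult_ac)
  have sb: "(\<Sum>b\<in>idx4. (R V a * R W b) * (e 0 (a!0) (b!0) * e 1 (a!1) (b!1) * e 2 (a!2) (b!2) * e 3 (a!3) (b!3))) = (R V a) * (ee 0 (a!0) * ee 1 (a!1) * ee 2 (a!2) * ee 3 (a!3))" for a
    by (rule trans[OF stage[of _ "R V a" "\<lambda>j. W 0 j * e 0 (a!0) j" "\<lambda>j. W 1 j * e 1 (a!1) j" "\<lambda>j. W 2 j * e 2 (a!2) j" "\<lambda>j. W 3 j * e 3 (a!3) j"]])
       (simp_all add: R_def dot_def h_def e_def ee_def mult_ac)
  have sa: "(\<Sum>a\<in>idx4. (R V a) * (ee 0 (a!0) * ee 1 (a!1) * ee 2 (a!2) * ee 3 (a!3))) = (1) * ((\<Sum>i<3. V 0 i * ee 0 i) * (\<Sum>i<3. V 1 i * ee 1 i) * (\<Sum>i<3. V 2 i * ee 2 i) * (\<Sum>i<3. V 3 i * ee 3 i))"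
    by (rule trans[OF stage[of _ "1" "\<lambda>i. V 0 i * ee 0 i" "\<lambda>i. V 1 i * ee 1 i" "\<lambda>i. V 2 i * ee 2 i" "\<lambda>i. V 3 i * ee 3 i"]])
       (simp_all add: R_def dot_def h_def e_def ee_def mult_ac)
  show ?thesis
    unfolding sc sb sa by (simp add: Dd_def Ee_def dot_def h_def e_def ee_def mult_ac)
qed

definition Pol :: "(nat \<Rightarrow> nat \<Rightarrow> nat \<Rightarrow> complex) \<Rightarrow> (nat \<Rightarrow> complex) \<Rightarrow> (nat \<Rightarrow> complex) \<Rightarrow> (nat \<Rightarrow> complex) \<Rightarrow> (nat \<Rightarrow> complex) \<Rightarrow> complex" where
  "Pol F v0 v1 v2 v3 = (\<Sum>a\<in>idx4. symb F a * v0 (a!0) * v1 (a!1) * v2 (a!2) * v3 (a!3))"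

lemma Pol4: "Pol F v0 v1 v2 v3 = (\<Sum>i<3. \<Sum>j<3. \<Sum>k<3. \<Sum>l<3. symb F [i,j,k,l] * v0 i * v1 j * v2 k * v3 l)"
  unfolding Pol_def idx4_sum by simp

lemma symb_swap01: "symb F [i,j,k,l] = symb F [j,i,k,l]"
  unfolding symb_def by simp
lemma symb_swap12: "symb F [i,j,k,l] = symb F [i,k,j,l]"
  unfolding symb_def by simp
lemma symb_swap23: "symb F [i,j,k,l] = symb F [i,j,l,k]"
  unfolding symb_def by simp

lemma Pol_swap01: "Pol F v0 v1 v2 v3 = Pol F v1 v0 v2 v3"
proof -
  have "Pol F v1 v0 v2 v3 = (\<Sum>j<3. \<Sum>i<3. \<Sum>k<3. \<Sum>l<3. symb F [j,i,k,l] * v1 j * v0 i * v2 k * v3 l)"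
    by (rule Pol4)
  also have "\<dots> = (\<Sum>i<3. \<Sum>j<3. \<Sum>k<3. \<Sum>l<3. symb F [j,i,k,l] * v1 j * v0 i * v2 k * v3 l)"
    by (rule sum.swap)
  also have "\<dots> = Pol F v0 v1 v2 v3"
    unfolding Pol4 by (intro sum.cong refl) (simp add: symb_swap01[of F _ _] mult_ac)
  finally show ?thesis by simp
qed

lemma Pol_swap12: "Pol F v0 v1 v2 v3 = Pol F v0 v2 v1 v3"
proof -
  have "Pol F v0 v2 v1 v3 = (\<Sum>i<3. \<Sum>j<3. \<Sum>k<3. \<Sum>l<3. symb F [i,j,k,l] * v0 i * v2 j * v1 k * v3 l)"
    by (rule Pol4)
  also have "\<dots> = (\<Sum>i<3. \<Sum>k<3. \<Sum>j<3. \<Sum>l<3. symb F [i,j,k,l] * v0 i * v2 j * v1 k * v3 l)"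
    by (intro sum.cong refl sum.swap)
  also have "\<dots> = Pol F v0 v1 v2 v3"
    unfolding Pol4 by (intro sum.cong refl) (simp add: symb_swap12[of F _ _] mult_ac)
  finally show ?thesis by simp
qed

lemma Pol_swap23: "Pol F v0 v1 v2 v3 = Pol F v0 v1 v3 v2"
proof -
  have "Pol F v0 v1 v3 v2 = (\<Sum>i<3. \<Sum>j<3. \<Sum>k<3. \<Sum>l<3. symb F [i,j,k,l] * v0 i * v1 j * v3 k * v2 l)"
    by (rule Pol4)
  also have "\<dots> = (\<Sum>i<3. \<Sum>j<3. \<Sum>l<3. \<Sum>k<3. symb F [i,j,k,l] * v0 i * v1 j * v3 k * v2 l)"
    by (intro sum.cong refl sum.swap)
  also have "\<dots> = Pol F v0 v1 v2 v3"
    unfolding Pol4 by (intro sum.cong refl) (simp add: symb_swap23[of F _ _] mult_ac)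
  finally show ?thesis by simp
qed

lemma Pol_cong: "(\<And>i. i < 3 \<Longrightarrow> v0 i = w0 i) \<Longrightarrow> (\<And>i. i < 3 \<Longrightarrow> v1 i = w1 i) \<Longrightarrow>
  (\<And>i. i < 3 \<Longrightarrow> v2 i = w2 i) \<Longrightarrow> (\<And>i. i < 3 \<Longrightarrow> v3 i = w3 i) \<Longrightarrow> Pol F v0 v1 v2 v3 = Pol F w0 w1 w2 w3"
  unfolding Pol4 by (intro sum.cong refl) auto

lemma Pol_lin0: "Pol F (\<lambda>i. \<alpha> * v i + \<beta> * w i) v1 v2 v3 = \<alpha> * Pol F v v1 v2 v3 + \<beta> * Pol F w v1 v2 v3"
  unfolding Pol_def by (simp add: sum.distrib sum_distrib_left algebra_simps)
lemma Pol_lin1: "Pol F v0 (\<lambda>i. \<alpha> * v i + \<beta> * w i) v2 v3 = \<alpha> * Pol F v0 v v2 v3 + \<beta> * Pol F v0 w v2 v3"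
  unfolding Pol_def by (simp add: sum.distrib sum_distrib_left algebra_simps)
lemma Pol_lin2: "Pol F v0 v1 (\<lambda>i. \<alpha> * v i + \<beta> * w i) v3 = \<alpha> * Pol F v0 v1 v v3 + \<beta> * Pol F v0 v1 w v3"
  unfolding Pol_def by (simp add: sum.distrib sum_distrib_left algebra_simps)
lemma Pol_lin3: "Pol F v0 v1 v2 (\<lambda>i. \<alpha> * v i + \<beta> * w i) = \<alpha> * Pol F v0 v1 v2 v + \<beta> * Pol F v0 v1 v2 w"
  unfolding Pol_def by (simp add: sum.distrib sum_distrib_left algebra_simps)

lemma Pol_addY0: "Pol F (\<lambda>i. v i + Y * w i) v1 v2 v3 = Pol F v v1 v2 v3 + Y * Pol F w v1 v2 v3"
  using Pol_lin0[of F 1 v Y w] by simp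
lemma Pol_addY1: "Pol F v0 (\<lambda>i. v i + Y * w i) v2 v3 = Pol F v0 v v2 v3 + Y * Pol F v0 w v2 v3"
  using Pol_lin1[of F v0 1 v Y w] by simp
lemma Pol_addY2: "Pol F v0 v1 (\<lambda>i. v i + Y * w i) v3 = Pol F v0 v1 v v3 + Y * Pol F v0 v1 w v3"
  using Pol_lin2[of F v0 v1 1 v Y w] by simp
lemma Pol_addY3: "Pol F v0 v1 v2 (\<lambda>i. v i + Y * w i) = Pol F v0 v1 v2 v + Y * Pol F v0 v1 v2 w"
  using Pol_lin3[of F v0 v1 v2 1 v Y w] by simp

lemma quartic_Pol: "quartic_eval F x = Pol F x x x x"
  unfolding quartic_eval_def Pol4
  by (simp add: sum3 symb_def numeral_eq_Suc atMost_Suc fact_numeral field_simps power_def)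

lemma swap_abc: "(\<Sum>a\<in>A. \<Sum>b\<in>B. \<Sum>c\<in>C. f a b c) = (\<Sum>c\<in>C. \<Sum>a\<in>A. \<Sum>b\<in>B. (f a b c :: complex))"
proof -
  have "(\<Sum>a\<in>A. \<Sum>b\<in>B. \<Sum>c\<in>C. f a b c) = (\<Sum>a\<in>A. \<Sum>c\<in>C. \<Sum>b\<in>B. f a b c)"
    by (intro sum.cong refl sum.swap)
  also have "\<dots> = (\<Sum>c\<in>C. \<Sum>a\<in>A. \<Sum>b\<in>B. f a b c)" by (rule sum.swap)
  finally show ?thesis .
qed

lemma prod2sum: "K * sum f A * sum g B = (\<Sum>a\<in>A. \<Sum>b\<in>B. K * f a * g b)" for K :: complex
proof -
  have "K * sum f A * sum g B = K * (sum f A * sum g B)" by simp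
  also have "\<dots> = K * (\<Sum>a\<in>A. \<Sum>b\<in>B. f a * g b)" by (simp add: sum_product)
  also have "\<dots> = (\<Sum>a\<in>A. \<Sum>b\<in>B. K * f a * g b)" by (simp add: sum_distrib_left mult.assoc)
  finally show ?thesis .
qed

lemma conc1_stage: "conc1 F x u = (\<Sum>c\<in>idx4. symb F c * x (c!0) * Pol F x x (\<lambda>i. dU u i (c!1)) (\<lambda>i. dU u i (c!2)) * Pol F x x x (\<lambda>i. dU u i (c!3)))"
proof -
  have "conc1 F x u = (\<Sum>c\<in>idx4. \<Sum>a\<in>idx4. \<Sum>b\<in>idx4. (x (a!0) * x (a!1) * x (b!0) * x (b!1) * x (b!2) * x (c!0)
     * dU u (a!2) (c!1) * dU u (a!3) (c!2) * dU u (b!3) (c!3)) * symb F a * symb F b * symb F c)"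
    unfolding conc1_def symb_eval_def by (rule swap_abc)
  also have "\<dots> = (\<Sum>c\<in>idx4. symb F c * x (c!0) * Pol F x x (\<lambda>i. dU u i (c!1)) (\<lambda>i. dU u i (c!2)) * Pol F x x x (\<lambda>i. dU u i (c!3)))"
  proof (rule sum.cong[OF refl])
    fix c
    show "(\<Sum>a\<in>idx4. \<Sum>b\<in>idx4. (x (a!0) * x (a!1) * x (b!0) * x (b!1) * x (b!2) * x (c!0)
     * dU u (a!2) (c!1) * dU u (a!3) (c!2) * dU u (b!3) (c!3)) * symb F a * symb F b * symb F c)
      = symb F c * x (c!0) * Pol F x x (\<lambda>i. dU u i (c!1)) (\<lambda>i. dU u i (c!2)) * Pol F x x x (\<lambda>i. dU u i (c!3))"
      unfolding Pol_def prod2sum by (intro sum.cong refl) (simp add: mult_ac)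
  qed
  finally show ?thesis .
qed

definition cross :: "(nat \<Rightarrow> complex) \<Rightarrow> (nat \<Rightarrow> complex) \<Rightarrow> nat \<Rightarrow> complex" where
  "cross p w = (\<lambda>m. if m = 0 then p 1 * w 2 - p 2 * w 1 else if m = 1 then p 2 * w 0 - p 0 * w 2 else p 0 * w 1 - p 1 * w 0)"

lemma less3_cases: "(i::nat) < 3 \<Longrightarrow> i = 0 \<or> i = 1 \<or> i = 2" by auto

lemma dU_cross: "i < 3 \<Longrightarrow> k < 3 \<Longrightarrow> dU (cross p w) i k = w k * p i + (- p k) * w i"
  apply (drule less3_cases, drule less3_cases)
  apply (elim disjE)
  by (simp_all add: dU_def cross_def eps_def sum3 algebra_simps)

lemma idx4_nth: "c \<in> idx4 \<Longrightarrow> m < 4 \<Longrightarrow> c!m < 3"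
  unfolding idx4_def by (auto simp: subset_iff)

lemma conc1_cross: "conc1 F x (cross p w) =
    Pol F x x p p * Pol F x x x p * Pol F x w w w - Pol F x x p p * Pol F x x x w * Pol F x w w p
  - Pol F x x p w * Pol F x x x p * Pol F x w p w + Pol F x x p w * Pol F x x x w * Pol F x w p p
  - Pol F x x w p * Pol F x x x p * Pol F x p w w + Pol F x x w p * Pol F x x x w * Pol F x p w p
  + Pol F x x w w * Pol F x x x p * Pol F x p p w - Pol F x x w w * Pol F x x x w * Pol F x p p p"
proof -
  define A1 where "A1 = Pol F x x p p"
  define A2 where "A2 = Pol F x x p w"
  define A3 where "A3 = Pol F x x w p"
  define A4 where "A4 = Pol F x x w w"
  define B1 where "B1 = Pol F x x x p"
  define B2 where "B2 = Pol F x x x w"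
  let ?T = "\<lambda>y1 y2 y3 c. symb F c * x (c!0) * y1 (c!1) * y2 (c!2) * (y3 (c!3) :: complex)"
  have pw: "symb F c * x (c!0) * Pol F x x (\<lambda>i. dU (cross p w) i (c!1)) (\<lambda>i. dU (cross p w) i (c!2)) * Pol F x x x (\<lambda>i. dU (cross p w) i (c!3))
     = (A1 * B1) * ?T w w w c + (- (A1 * B2)) * ?T w w p c + (- (A2 * B1)) * ?T w p w c + (A2 * B2) * ?T w p p c
     + (- (A3 * B1)) * ?T p w w c + (A3 * B2) * ?T p w p c + (A4 * B1) * ?T p p w c + (- (A4 * B2)) * ?T p p p c"
    if c: "c \<in> idx4" for c
  proof -
    have e1: "Pol F x x (\<lambda>i. dU (cross p w) i (c!1)) (\<lambda>i. dU (cross p w) i (c!2))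
      = Pol F x x (\<lambda>i. w (c!1) * p i + (- p (c!1)) * w i) (\<lambda>i. w (c!2) * p i + (- p (c!2)) * w i)"
      by (rule Pol_cong) (simp_all add: dU_cross idx4_nth[OF c])
    have e2: "Pol F x x x (\<lambda>i. dU (cross p w) i (c!3)) = Pol F x x x (\<lambda>i. w (c!3) * p i + (- p (c!3)) * w i)"
      by (rule Pol_cong) (simp_all add: dU_cross idx4_nth[OF c])
    show ?thesis unfolding e1 e2 Pol_lin2 Pol_lin3 A1_def A2_def A3_def A4_def B1_def B2_def
      by (simp add: algebra_simps)
  qed
  have "conc1 F x (cross p w) = (\<Sum>c\<in>idx4. (A1 * B1) * ?T w w w c + (- (A1 * B2)) * ?T w w p c + (- (A2 * B1)) * ?T w p w c + (A2 * B2) * ?T w p p c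
     + (- (A3 * B1)) * ?T p w w c + (A3 * B2) * ?T p w p c + (A4 * B1) * ?T p p w c + (- (A4 * B2)) * ?T p p p c)"
    unfolding conc1_stage by (rule sum.cong[OF refl pw])
  also have "\<dots> = (A1 * B1) * Pol F x w w w + (- (A1 * B2)) * Pol F x w w p + (- (A2 * B1)) * Pol F x w p w + (A2 * B2) * Pol F x w p p
     + (- (A3 * B1)) * Pol F x p w w + (A3 * B2) * Pol F x p w p + (A4 * B1) * Pol F x p p w + (- (A4 * B2)) * Pol F x p p p"
    unfolding Pol_def sum.distrib sum_distrib_left[symmetric] by (rule refl)
  finally show ?thesis unfolding A1_def A2_def A3_def A4_def B1_def B2_def by simp
qed

definition aP :: "(nat \<Rightarrow> nat \<Rightarrow> nat \<Rightarrow> complex) \<Rightarrow> (nat \<Rightarrow> complex) \<Rightarrow> (nat \<Rightarrow> complex) \<Rightarrow> nat \<Rightarrow> complex" where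
  "aP F p w k = (if k = 0 then Pol F p p p p else if k = 1 then Pol F p p p w else if k = 2 then Pol F p p w w
     else if k = 3 then Pol F p w w w else Pol F w w w w)"

definition tco :: "(nat \<Rightarrow> nat \<Rightarrow> nat \<Rightarrow> complex) \<Rightarrow> (nat \<Rightarrow> complex) \<Rightarrow> (nat \<Rightarrow> complex) \<Rightarrow> nat \<Rightarrow> complex" where
  "tco F p w k = (let a0 = aP F p w 0; a1 = aP F p w 1; a2 = aP F p w 2; a3 = aP F p w 3; a4 = aP F p w 4 in
     if k = 0 then 2*a1^3 - 3*a0*a1*a2 + a0^2*a3
     else if k = 1 then 6*a1^2*a2 - 9*a0*a2^2 + 2*a0*a1*a3 + a0^2*a4
     else if k = 2 then 10*a1^2*a3 - 15*a0*a2*a3 + 5*a0*a1*a4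
     else if k = 3 then 10*a1^2*a4 - 10*a0*a3^2
     else if k = 4 then -10*a1*a3^2 + 15*a1*a2*a4 - 5*a0*a3*a4
     else if k = 5 then -6*a2*a3^2 + 9*a2^2*a4 - 2*a1*a3*a4 - a0*a4^2
     else -2*a3^3 + 3*a2*a3*a4 - a1*a4^2)"

lemma sortw1: "Pol F w p v2 v3 = Pol F p w v2 v3" by (rule Pol_swap01)
lemma sortw2: "Pol F v0 w p v3 = Pol F v0 p w v3" by (rule Pol_swap12)
lemma sortw3: "Pol F v0 v1 w p = Pol F v0 v1 p w" by (rule Pol_swap23)

lemma conc1_line: "conc1 F (\<lambda>i. p i + Y * w i) (cross p w) = (\<Sum>i\<le>6. tco F p w i * Y^i)"
  unfolding conc1_cross Pol_addY0 Pol_addY1 Pol_addY2 Pol_addY3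
  by (simp add: sortw1[of F w p] sortw2[of F _ w p] sortw3[of F _ _ w p] tco_def aP_def Let_def
      numeral_eq_Suc atMost_Suc algebra_simps)

lemma t01: assumes "\<forall>x u. conc1 F x u = 0"
  shows "tco F p w 0 = 0" "tco F p w 1 = 0"
proof -
  have "\<And>Y. (\<Sum>i\<le>6. tco F p w i * Y^i) = 0" using assms conc1_line[of F p _ w, symmetric] by simp
  then show "tco F p w 0 = 0" "tco F p w 1 = 0"
    using zero_polynom_imp_zero_coeffs[of "tco F p w" 6] by auto
qed

lemma square_rel: assumes "\<forall>x u. conc1 F x u = 0"
  shows "Pol F p p p p ^ 3 * Pol F w w w w = (3 * Pol F p p p p * Pol F p p w w - 2 * Pol F p p p w ^ 2)^2"
proof -
  have "Pol F p p p p ^ 3 * Pol F w w w w - (3 * Pol F p p p p * Pol F p p w w - 2 * Pol F p p p w ^ 2)^2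
     = Pol F p p p p * tco F p w 1 - 2 * Pol F p p p w * tco F p w 0"
    by (simp add: tco_def aP_def Let_def algebra_simps power2_eq_square power3_eq_cube)
  then show ?thesis using t01[OF assms, of p w] by simp
qed

definition M :: "(nat \<Rightarrow> nat \<Rightarrow> nat \<Rightarrow> complex) \<Rightarrow> (nat \<Rightarrow> complex) \<Rightarrow> nat \<Rightarrow> nat \<Rightarrow> complex" where
  "M F x i j = (\<Sum>a0<3. \<Sum>a1<3. symb F [a0,a1,i,j] * x a0 * x a1)"

lemma contr2: "(\<Sum>b\<in>idx4. symb F b * x (b!0) * x (b!1) * f (b!2) (b!3)) = (\<Sum>k<3. \<Sum>l<3. M F x k l * f k l)"
  unfolding idx4_sum M_def by (simp add: sum3 algebra_simps)

lemma rev3: "(\<Sum>a\<in>A. \<Sum>b\<in>B. \<Sum>c\<in>C. f a b c) = (\<Sum>c\<in>C. \<Sum>b\<in>B. \<Sum>a\<in>A. (f a b c :: complex))"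
proof -
  have "(\<Sum>a\<in>A. \<Sum>b\<in>B. \<Sum>c\<in>C. f a b c) = (\<Sum>b\<in>B. \<Sum>a\<in>A. \<Sum>c\<in>C. f a b c)" by (rule sum.swap)
  also have "\<dots> = (\<Sum>b\<in>B. \<Sum>c\<in>C. \<Sum>a\<in>A. f a b c)" by (intro sum.cong refl sum.swap)
  also have "\<dots> = (\<Sum>c\<in>C. \<Sum>b\<in>B. \<Sum>a\<in>A. f a b c)" by (rule sum.swap)
  finally show ?thesis .
qed

lemma pull: "(\<And>a. a \<in> A \<Longrightarrow> f a = K * g a) \<Longrightarrow> sum f A = K * (sum g A :: complex)"
  by (simp add: sum_distrib_left cong: sum.cong)

lemma conc2_M: "conc2 F x u = (\<Sum>m<3. \<Sum>n<3. M F x m n * (\<Sum>k<3. \<Sum>l<3. M F x k l * (\<Sum>i<3. \<Sum>j<3. M F x i j * (eps i k m * eps j l n))))"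
proof -
  define g where "g k m l n = (\<Sum>i<3. \<Sum>j<3. M F x i j * (eps i k m * eps j l n))" for k m l n
  define h where "h m n = (\<Sum>k<3. \<Sum>l<3. M F x k l * g k m l n)" for m n
  have sa: "(\<Sum>a\<in>idx4. (x (a!0) * x (a!1) * x (b!0) * x (b!1) * x (c!0) * x (c!1)
     * eps (a!2) (b!2) (c!2) * eps (a!3) (b!3) (c!3)) * symb F a * symb F b * symb F c)
     = (symb F b * x (b!0) * x (b!1) * symb F c * x (c!0) * x (c!1)) * g (b!2) (c!2) (b!3) (c!3)" for b c
  proof -
    have "(\<Sum>a\<in>idx4. symb F a * x (a!0) * x (a!1) * (eps (a!2) (b!2) (c!2) * eps (a!3) (b!3) (c!3)))
       = g (b!2) (c!2) (b!3) (c!3)"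
      unfolding g_def by (rule contr2[of F x "\<lambda>i j. eps i (b!2) (c!2) * eps j (b!3) (c!3)"])
    moreover have "(\<Sum>a\<in>idx4. (x (a!0) * x (a!1) * x (b!0) * x (b!1) * x (c!0) * x (c!1)
     * eps (a!2) (b!2) (c!2) * eps (a!3) (b!3) (c!3)) * symb F a * symb F b * symb F c)
     = (symb F b * x (b!0) * x (b!1) * symb F c * x (c!0) * x (c!1)) * (\<Sum>a\<in>idx4. symb F a * x (a!0) * x (a!1) * (eps (a!2) (b!2) (c!2) * eps (a!3) (b!3) (c!3)))"
      by (rule pull) (simp add: mult_ac)
    ultimately show ?thesis by simp
  qed
  have sb: "(\<Sum>b\<in>idx4. (symb F b * x (b!0) * x (b!1) * symb F c * x (c!0) * x (c!1)) * g (b!2) (c!2) (b!3) (c!3))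
     = (symb F c * x (c!0) * x (c!1)) * h (c!2) (c!3)" for c
  proof -
    have "(\<Sum>b\<in>idx4. symb F b * x (b!0) * x (b!1) * g (b!2) (c!2) (b!3) (c!3)) = h (c!2) (c!3)"
      unfolding h_def by (rule contr2[of F x "\<lambda>k l. g k (c!2) l (c!3)"])
    moreover have "(\<Sum>b\<in>idx4. (symb F b * x (b!0) * x (b!1) * symb F c * x (c!0) * x (c!1)) * g (b!2) (c!2) (b!3) (c!3))
     = (symb F c * x (c!0) * x (c!1)) * (\<Sum>b\<in>idx4. symb F b * x (b!0) * x (b!1) * g (b!2) (c!2) (b!3) (c!3))"
      by (rule pull) (simp add: mult_ac)
    ultimately show ?thesis by simp
  qed
  have "conc2 F x u = (\<Sum>c\<in>idx4. \<Sum>b\<in>idx4. \<Sum>a\<in>idx4. (x (a!0) * x (a!1) * x (b!0) * x (b!1) * x (c!0) * x (c!1)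
     * eps (a!2) (b!2) (c!2) * eps (a!3) (b!3) (c!3)) * symb F a * symb F b * symb F c)"
    unfolding conc2_def symb_eval_def by (rule rev3)
  also have "\<dots> = (\<Sum>c\<in>idx4. symb F c * x (c!0) * x (c!1) * h (c!2) (c!3))"
    unfolding sa sb by simp
  also have "\<dots> = (\<Sum>m<3. \<Sum>n<3. M F x m n * h m n)"
    by (rule contr2)
  finally show ?thesis unfolding h_def g_def .
qed

definition det3 :: "(nat \<Rightarrow> nat \<Rightarrow> complex) \<Rightarrow> complex" where
  "det3 A = A 0 0 * A 1 1 * A 2 2 - A 0 0 * A 1 2 * A 2 1 - A 0 1 * A 1 0 * A 2 2
          + A 0 1 * A 1 2 * A 2 0 + A 0 2 * A 1 0 * A 2 1 - A 0 2 * A 1 1 * A 2 0"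

lemma conc2_det: "conc2 F x u = 6 * det3 (M F x)"
  unfolding conc2_M det3_def by (simp add: sum3 eps_def algebra_simps)

lemma det_rank1: "det3 (\<lambda>i j. \<alpha> * A i j + \<beta> * m i * m j) = \<alpha>^3 * det3 A + \<alpha>^2 * \<beta> *
   (m 0 * (m 0 * (A 1 1 * A 2 2 - A 1 2 * A 2 1) + m 1 * (A 0 2 * A 2 1 - A 0 1 * A 2 2) + m 2 * (A 0 1 * A 1 2 - A 0 2 * A 1 1))
  + m 1 * (m 0 * (A 1 2 * A 2 0 - A 1 0 * A 2 2) + m 1 * (A 0 0 * A 2 2 - A 0 2 * A 2 0) + m 2 * (A 0 2 * A 1 0 - A 0 0 * A 1 2))
  + m 2 * (m 0 * (A 1 0 * A 2 1 - A 1 1 * A 2 0) + m 1 * (A 0 1 * A 2 0 - A 0 0 * A 2 1) + m 2 * (A 0 0 * A 1 1 - A 0 1 * A 1 0)))"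
  unfolding det3_def by (simp add: algebra_simps power2_eq_square power3_eq_cube)

lemma adj_quad: "m = (\<lambda>l. A 0 l * p 0 + A 1 l * p 1 + A 2 l * p 2) \<Longrightarrow>
   (m 0 * (m 0 * (A 1 1 * A 2 2 - A 1 2 * A 2 1) + m 1 * (A 0 2 * A 2 1 - A 0 1 * A 2 2) + m 2 * (A 0 1 * A 1 2 - A 0 2 * A 1 1))
  + m 1 * (m 0 * (A 1 2 * A 2 0 - A 1 0 * A 2 2) + m 1 * (A 0 0 * A 2 2 - A 0 2 * A 2 0) + m 2 * (A 0 2 * A 1 0 - A 0 0 * A 1 2))
  + m 2 * (m 0 * (A 1 0 * A 2 1 - A 1 1 * A 2 0) + m 1 * (A 0 1 * A 2 0 - A 0 0 * A 2 1) + m 2 * (A 0 0 * A 1 1 - A 0 1 * A 1 0)))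
  = (m 0 * p 0 + m 1 * p 1 + m 2 * p 2) * det3 A"
  unfolding det3_def by (simp add: algebra_simps)

lemma pivot:
  fixes a b c d e f :: complex
  assumes a: "a \<noteq> 0" and det: "a*b*c + 2*d*e*f - a*f^2 - b*e^2 - c*d^2 = 0"
  shows "\<exists>l1 l2 l3 m1 m2 m3. \<forall>X Y Z. a*X^2 + b*Y^2 + c*Z^2 + 2*d*X*Y + 2*e*X*Z + 2*f*Y*Z
      = (l1*X + l2*Y + l3*Z) * (m1*X + m2*Y + m3*Z)"
proof -
  define r11 where "r11 = a*b - d^2"
  define r12 where "r12 = a*f - d*e"
  define r22 where "r22 = a*c - e^2"
  have rel: "r11 * r22 = r12^2"
  proof -
    have "r11 * r22 - r12^2 = a * (a*b*c + 2*d*e*f - a*f^2 - b*e^2 - c*d^2)"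
      unfolding r11_def r12_def r22_def by (simp add: algebra_simps power2_eq_square)
    then show ?thesis using det by simp
  qed
  obtain t1 t2 where t: "\<forall>Y Z. (t1*Y + t2*Z)^2 = -(r11*Y^2 + 2*r12*Y*Z + r22*Z^2)"
  proof (cases "r11 = 0")
    case True
    then have "r12 = 0" using rel by simp
    obtain s where s: "s^2 = - r22" by (metis power2_csqrt)
    show ?thesis by (rule that[of 0 s]) (simp add: True \<open>r12 = 0\<close> power_mult_distrib s)
  next
    case False
    obtain s where s: "s^2 = - 1 / r11" by (metis power2_csqrt)
    have r22: "r22 = r12^2 / r11" using rel False by (simp add: field_simps)
    show ?thesis
    proof (rule that[of "s*r11" "s*r12"], intro allI)
      fix Y Z
      have "(s*r11*Y + s*r12*Z)^2 = s^2 * (r11*Y + r12*Z)^2" by (simp add: algebra_simps power2_eq_square)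
      also have "\<dots> = - ((r11*Y + r12*Z)^2 / r11)" by (simp add: s)
      also have "\<dots> = -(r11*Y^2 + 2*r12*Y*Z + r22*Z^2)" unfolding r22 using False
        by (simp add: field_simps power2_eq_square)
      finally show "(s*r11*Y + s*r12*Z)^2 = -(r11*Y^2 + 2*r12*Y*Z + r22*Z^2)" .
    qed
  qed
  define l where "l X Y Z = a*X + d*Y + e*Z" for X Y Z
  have key: "a * (a*X^2 + b*Y^2 + c*Z^2 + 2*d*X*Y + 2*e*X*Z + 2*f*Y*Z) = (l X Y Z - (t1*Y + t2*Z)) * (l X Y Z + (t1*Y + t2*Z))" for X Y Z
  proof -
    have "(l X Y Z - (t1*Y + t2*Z)) * (l X Y Z + (t1*Y + t2*Z)) = (l X Y Z)^2 - (t1*Y + t2*Z)^2"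
      by (simp add: algebra_simps power2_eq_square)
    also have "\<dots> = (l X Y Z)^2 + (r11*Y^2 + 2*r12*Y*Z + r22*Z^2)" using t by simp
    also have "\<dots> = a * (a*X^2 + b*Y^2 + c*Z^2 + 2*d*X*Y + 2*e*X*Z + 2*f*Y*Z)"
      unfolding l_def r11_def r12_def r22_def by (simp add: algebra_simps power2_eq_square)
    finally show ?thesis by simp
  qed
  show ?thesis
  proof (intro exI allI)
    fix X Y Z
    have "a*X^2 + b*Y^2 + c*Z^2 + 2*d*X*Y + 2*e*X*Z + 2*f*Y*Z = (l X Y Z - (t1*Y + t2*Z)) * (l X Y Z + (t1*Y + t2*Z)) / a"
      using key[of X Y Z] a by (simp add: field_simps)
    also have "\<dots> = (1*X + ((d - t1)/a)*Y + ((e - t2)/a)*Z) * (a*X + (d + t1)*Y + (e + t2)*Z)"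
      unfolding l_def using a by (simp add: field_simps)
    finally show "a*X^2 + b*Y^2 + c*Z^2 + 2*d*X*Y + 2*e*X*Z + 2*f*Y*Z = (1*X + ((d - t1)/a)*Y + ((e - t2)/a)*Z) * (a*X + (d + t1)*Y + (e + t2)*Z)" .
  qed
qed

definition mk3 :: "complex \<Rightarrow> complex \<Rightarrow> complex \<Rightarrow> nat \<Rightarrow> complex" where
  "mk3 x y z = (\<lambda>i. if i = 0 then x else if i = 1 then y else z)"

lemma lin_mk3: "lin (mk3 x y z) w = x * w 0 + y * w 1 + z * w 2"
  unfolding lin_def mk3_def by (simp add: sum3)

lemma quad_factor:
  assumes sym: "\<And>i j. K i j = K j i" and det: "det3 K = 0"
  shows "\<exists>L1 L2. \<forall>w. (\<Sum>k<3. \<Sum>l<3. K k l * w k * w l) = lin L1 w * lin L2 w"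
proof -
  define a where "a = K 0 0"
  define b where "b = K 1 1"
  define c where "c = K 2 2"
  define d where "d = K 0 1"
  define e where "e = K 0 2"
  define f where "f = K 1 2"
  have q: "(\<Sum>k<3. \<Sum>l<3. K k l * w k * w l) = a*(w 0)^2 + b*(w 1)^2 + c*(w 2)^2 + 2*d*(w 0)*(w 1) + 2*e*(w 0)*(w 2) + 2*f*(w 1)*(w 2)" for w
    unfolding a_def b_def c_def d_def e_def f_def using sym[of 1 0] sym[of 2 0] sym[of 2 1]
    by (simp add: sum3 algebra_simps power2_eq_square)
  have dt: "a*b*c + 2*d*e*f - a*f^2 - b*e^2 - c*d^2 = 0"
    using det sym[of 1 0] sym[of 2 0] sym[of 2 1]
    unfolding det3_def a_def b_def c_def d_def e_def f_def by (simp add: algebra_simps power2_eq_square)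
  show ?thesis
  proof (cases "a \<noteq> 0")
    case True
    then obtain l1 l2 l3 m1 m2 m3 where h: "\<forall>X Y Z. a*X^2 + b*Y^2 + c*Z^2 + 2*d*X*Y + 2*e*X*Z + 2*f*Y*Z
      = (l1*X + l2*Y + l3*Z) * (m1*X + m2*Y + m3*Z)" using pivot[OF _ dt] by blast
    show ?thesis by (rule exI[of _ "mk3 l1 l2 l3"], rule exI[of _ "mk3 m1 m2 m3"]) (simp add: q lin_mk3 h)
  next
    case a0: False
    show ?thesis
    proof (cases "b \<noteq> 0")
      case True
      have dt': "b*a*c + 2*d*f*e - b*e^2 - a*f^2 - c*d^2 = 0" using dt by (simp add: algebra_simps)
      obtain l1 l2 l3 m1 m2 m3 where h: "\<forall>X Y Z. b*X^2 + a*Y^2 + c*Z^2 + 2*d*X*Y + 2*f*X*Z + 2*e*Y*Z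
        = (l1*X + l2*Y + l3*Z) * (m1*X + m2*Y + m3*Z)" using pivot[OF True dt'] by blast
      show ?thesis
      proof (rule exI[of _ "mk3 l2 l1 l3"], rule exI[of _ "mk3 m2 m1 m3"], intro allI)
        fix w
        show "(\<Sum>k<3. \<Sum>l<3. K k l * w k * w l) = lin (mk3 l2 l1 l3) w * lin (mk3 m2 m1 m3) w"
          using h[rule_format, of "w 1" "w 0" "w 2"] unfolding q lin_mk3 by (simp add: algebra_simps)
      qed
    next
      case b0: False
      show ?thesis
      proof (cases "c \<noteq> 0")
        case True
        have dt': "c*a*b + 2*e*f*d - c*d^2 - a*f^2 - b*e^2 = 0" using dt by (simp add: algebra_simps)
        obtain l1 l2 l3 m1 m2 m3 where h: "\<forall>X Y Z. c*X^2 + a*Y^2 + b*Z^2 + 2*e*X*Y + 2*f*X*Z + 2*d*Y*Z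
          = (l1*X + l2*Y + l3*Z) * (m1*X + m2*Y + m3*Z)" using pivot[OF True dt'] by blast
        show ?thesis
        proof (rule exI[of _ "mk3 l2 l3 l1"], rule exI[of _ "mk3 m2 m3 m1"], intro allI)
          fix w
          show "(\<Sum>k<3. \<Sum>l<3. K k l * w k * w l) = lin (mk3 l2 l3 l1) w * lin (mk3 m2 m3 m1) w"
            using h[rule_format, of "w 2" "w 0" "w 1"] unfolding q lin_mk3 by (simp add: algebra_simps)
        qed
      next
        case c0: False
        have "a = 0" "b = 0" "c = 0" using a0 b0 c0 by auto
        then have "d = 0 \<or> e = 0 \<or> f = 0" using dt by simp
        then show ?thesis
        proof (elim disjE)
          assume "d = 0"
          show ?thesis
            by (rule exI[of _ "mk3 0 0 1"], rule exI[of _ "mk3 (2*e) (2*f) 0"], simp only: q lin_mk3)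
               (simp add: \<open>a = 0\<close> \<open>b = 0\<close> \<open>c = 0\<close> \<open>d = 0\<close> algebra_simps)
        next
          assume "e = 0"
          show ?thesis
            by (rule exI[of _ "mk3 0 1 0"], rule exI[of _ "mk3 (2*d) 0 (2*f)"], simp only: q lin_mk3)
               (simp add: \<open>a = 0\<close> \<open>b = 0\<close> \<open>c = 0\<close> \<open>e = 0\<close> algebra_simps)
        next
          assume "f = 0"
          show ?thesis
            by (rule exI[of _ "mk3 1 0 0"], rule exI[of _ "mk3 0 (2*d) (2*e)"], simp only: q lin_mk3)
               (simp add: \<open>a = 0\<close> \<open>b = 0\<close> \<open>c = 0\<close> \<open>f = 0\<close> algebra_simps)
        qed
      qed
    qed
  qed
qed

lemma M_sym: "M F x i j = M F x j i"
  unfolding M_def by (intro sum.cong refl) (simp add: symb_swap23[of F _ _ i j])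

lemma converse:
  assumes c1: "\<forall>x u. conc1 F x u = 0" and c2: "\<forall>x u. conc2 F x u = 0"
  shows "\<exists>L1 L2 :: nat \<Rightarrow> complex. \<forall>x. quartic_eval F x = (lin L1 x * lin L2 x) ^ 2"
proof (cases "\<forall>x. quartic_eval F x = 0")
  case True
  show ?thesis by (rule exI[of _ "\<lambda>_. 0"], rule exI[of _ "\<lambda>_. 0"]) (simp add: True lin_def)
next
  case False
  then obtain p where p: "quartic_eval F p \<noteq> 0" by blast
  define c where "c = Pol F p p p p"
  have c0: "c \<noteq> 0" using p unfolding c_def quartic_Pol .
  define A where "A = M F p"
  define m where "m = (\<lambda>l. A 0 l * p 0 + A 1 l * p 1 + A 2 l * p 2)"
  have Asym: "A i j = A j i" for i j unfolding A_def by (rule M_sym)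
  have PolA: "Pol F p p w w = (\<Sum>k<3. \<Sum>l<3. A k l * (w k * w l))" for w
    unfolding Pol_def A_def using contr2[of F p "\<lambda>k l. w k * w l"] by (simp add: mult.assoc)
  have Polm0: "Pol F p p p w = (\<Sum>k<3. \<Sum>l<3. A k l * (p k * w l))" for w
    unfolding Pol_def A_def using contr2[of F p "\<lambda>k l. p k * w l"] by (simp add: mult.assoc)
  have Polm: "Pol F p p p w = m 0 * w 0 + m 1 * w 1 + m 2 * w 2" for w
    unfolding Polm0 m_def by (simp add: sum3 algebra_simps)
  have cm: "c = m 0 * p 0 + m 1 * p 1 + m 2 * p 2" unfolding c_def Polm by simp
  have detA: "det3 A = 0" using c2 conc2_det[of F p] unfolding A_def by simp
  define K where "K i j = (3*c) * A i j + (-2) * m i * m j" for i j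
  have Ksym: "K i j = K j i" for i j unfolding K_def using Asym[of i j] by (simp add: mult.commute)
  have detK: "det3 K = 0"
  proof -
    have "det3 K = (3*c)^3 * det3 A + (3*c)^2 * (-2) * ((m 0 * p 0 + m 1 * p 1 + m 2 * p 2) * det3 A)"
      unfolding K_def det_rank1 adj_quad[OF m_def] by simp
    then show ?thesis using detA by simp
  qed
  obtain L1 L2 where L: "\<forall>w. (\<Sum>k<3. \<Sum>l<3. K k l * w k * w l) = lin L1 w * lin L2 w"
    using quad_factor[OF Ksym detK] by blast
  have sq: "c^3 * quartic_eval F w = (lin L1 w * lin L2 w)^2" for w
  proof -
    have "c^3 * quartic_eval F w = (3 * c * Pol F p p w w - 2 * Pol F p p p w ^ 2)^2"
      using square_rel[OF c1, of p w] unfolding quartic_Pol c_def .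
    also have "3 * c * Pol F p p w w - 2 * Pol F p p p w ^ 2 = (\<Sum>k<3. \<Sum>l<3. K k l * w k * w l)"
      unfolding PolA Polm K_def by (simp add: sum3 algebra_simps power2_eq_square)
    finally show ?thesis using L by simp
  qed
  define s where "s = csqrt c"
  have s2: "s^2 = c" unfolding s_def by simp
  have s0: "s \<noteq> 0" using c0 s2 by auto
  have s6: "c^3 = (s^3)^2"
  proof -
    have "(s^3)^2 = (s^2)^3" by (simp add: power_mult[symmetric] mult.commute)
    then show ?thesis using s2 by simp
  qed
  show ?thesis
  proof (rule exI[of _ "\<lambda>i. L1 i / s^3"], rule exI[of _ L2], intro allI)
    fix x
    have lin_div: "lin (\<lambda>i. L1 i / s^3) x = lin L1 x / s^3"
      unfolding lin_def by (simp add: sum_divide_distrib)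
    have "quartic_eval F x = (lin L1 x * lin L2 x)^2 / c^3" using sq[of x] c0 by (simp add: field_simps)
    also have "\<dots> = (lin (\<lambda>i. L1 i / s^3) x * lin L2 x)^2"
      unfolding lin_div s6 using s0 by (simp add: field_simps power2_eq_square)
    finally show "quartic_eval F x = (lin (\<lambda>i. L1 i / s^3) x * lin L2 x)^2" .
  qed
qed

lemma ident:
  assumes z: "\<forall>x. quartic_eval D x = 0" and ab: "a + b \<le> 4"
  shows "D a b (4 - a - b) = 0"
proof -
  define C where "C y z a = (\<Sum>b\<le>4 - a. D a b (4 - a - b) * y ^ b * z ^ (4 - a - b))" for y z a
  have e: "quartic_eval D (\<lambda>i. if i = 0 then t else if i = 1 then y else z) = (\<Sum>a\<le>4. C y z a * t ^ a)" for t y z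
    unfolding quartic_eval_def C_def by (simp add: sum_distrib_left mult_ac)
  have Cz: "C y z a = 0" if "a \<le> 4" for y z a
    using zero_polynom_imp_zero_coeffs[of "C y z" 4 a] z e that by metis
  have "(\<Sum>b\<le>4 - a. D a b (4 - a - b) * y ^ b) = 0" for y
    using Cz[of a y 1] ab unfolding C_def by simp
  then show ?thesis
    using zero_polynom_imp_zero_coeffs[of "\<lambda>b. D a b (4 - a - b)" "4 - a" b] ab by simp
qed

definition pats :: "nat list list" where
  "pats = [[0,0,1,1],[0,1,0,1],[0,1,1,0],[1,0,0,1],[1,0,1,0],[1,1,0,0]]"

definition Varr :: "(nat \<Rightarrow> complex) \<Rightarrow> (nat \<Rightarrow> complex) \<Rightarrow> nat \<Rightarrow> nat \<Rightarrow> nat \<Rightarrow> complex" where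
  "Varr L1 L2 r m = (if pats!r!m = 0 then L1 else L2)"

definition U :: "(nat \<Rightarrow> complex) \<Rightarrow> (nat \<Rightarrow> complex) \<Rightarrow> nat list \<Rightarrow> complex" where
  "U L1 L2 a = (\<Sum>r<6. R (Varr L1 L2 r) a) / 6"

definition Gc :: "(nat \<Rightarrow> complex) \<Rightarrow> (nat \<Rightarrow> complex) \<Rightarrow> nat \<Rightarrow> nat \<Rightarrow> nat \<Rightarrow> complex" where
  "Gc L1 L2 a b c = U L1 L2 (replicate a 0 @ replicate b 1 @ replicate c 2) * 24 / (fact a * fact b * fact c)"

lemma sum6: "(\<Sum>r<6. f r) = f 0 + f 1 + f 2 + f 3 + f 4 + (f 5 :: complex)" for f :: "nat \<Rightarrow> complex"
  by (simp add: numeral_eq_Suc add_ac)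

lemma Gc_eval: "quartic_eval (Gc L1 L2) x = (lin L1 x * lin L2 x)^2"
  unfolding quartic_eval_def Gc_def U_def
  by (simp add: numeral_eq_Suc atMost_Suc sum6 R_def Varr_def pats_def lin_def sum3 fact_numeral
      field_simps power2_eq_square)

lemma idx4_obtain: assumes "a \<in> idx4" obtains i j k l where "a = [i,j,k,l]" "i < 3" "j < 3" "k < 3" "l < 3"
  using assms unfolding idx4_eq by auto

lemma symbG_canon: "symb (Gc L1 L2) a = U L1 L2 (replicate (count_list a 0) 0 @ replicate (count_list a 1) 1 @ replicate (count_list a 2) 2)"
  unfolding symb_def Gc_def by (simp add: field_simps fact_numeral)

lemma symbG: assumes "a \<in> idx4" shows "symb (Gc L1 L2) a = U L1 L2 a"
proof -
  obtain i j k l where a: "a = [i,j,k,l]" "i < 3" "j < 3" "k < 3" "l < 3" using assms by (rule idx4_obtain)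
  from a(2-5) show ?thesis unfolding symbG_canon a(1)
    apply -
    apply (drule less3_cases)+
    apply (elim disjE)
    by (simp_all add: U_def sum6 R_def Varr_def pats_def mult_ac)
qed

lemma cnt4: assumes "a \<in> idx4" shows "count_list a 0 + count_list a 1 + count_list a 2 = 4"
proof -
  obtain i j k l where a: "a = [i,j,k,l]" "i < 3" "j < 3" "k < 3" "l < 3" using assms by (rule idx4_obtain)
  from a(2-5) show ?thesis unfolding a(1)
    apply -
    apply (drule less3_cases)+
    apply (elim disjE)
    by simp_all
qed

lemma symbF:
  assumes "\<forall>x. quartic_eval F x = (lin L1 x * lin L2 x)^2" and a: "a \<in> idx4"
  shows "symb F a = U L1 L2 a"
proof -
  define D where "D a b c = F a b c - Gc L1 L2 a b c" for a b c
  have z: "\<forall>x. quartic_eval D x = 0"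
  proof
    fix x
    have "quartic_eval D x = quartic_eval F x - quartic_eval (Gc L1 L2) x"
      unfolding quartic_eval_def D_def by (simp add: sum_subtractf algebra_simps)
    then show "quartic_eval D x = 0" using assms(1) Gc_eval by simp
  qed
  have c: "count_list a 2 = 4 - count_list a 0 - count_list a 1" "count_list a 0 + count_list a 1 \<le> 4"
    using cnt4[OF a] by auto
  have "F (count_list a 0) (count_list a 1) (count_list a 2) = Gc L1 L2 (count_list a 0) (count_list a 1) (count_list a 2)"
    using ident[OF z c(2)] unfolding D_def c(1) by simp
  then have "symb F a = symb (Gc L1 L2) a" unfolding symb_def by simp
  then show ?thesis using symbG[OF a] by simp
qed

lemma mv3: "(\<Sum>t\<in>I. \<Sum>a\<in>A. \<Sum>b\<in>B. \<Sum>c\<in>C. f t a b c) = (\<Sum>a\<in>A. \<Sum>b\<in>B. \<Sum>c\<in>C. \<Sum>t\<in>I. (f t a b c::complex))"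
proof -
  have "(\<Sum>t\<in>I. \<Sum>a\<in>A. \<Sum>b\<in>B. \<Sum>c\<in>C. f t a b c) = (\<Sum>a\<in>A. \<Sum>t\<in>I. \<Sum>b\<in>B. \<Sum>c\<in>C. f t a b c)"
    by (rule sum.swap)
  also have "\<dots> = (\<Sum>a\<in>A. \<Sum>b\<in>B. \<Sum>t\<in>I. \<Sum>c\<in>C. f t a b c)"
    by (rule sum.cong[OF refl], rule sum.swap)
  also have "\<dots> = (\<Sum>a\<in>A. \<Sum>b\<in>B. \<Sum>c\<in>C. \<Sum>t\<in>I. f t a b c)"
    by (rule sum.cong[OF refl], rule sum.cong[OF refl], rule sum.swap)
  finally show ?thesis .
qed

lemma prod3sum: "K * sum f A * sum g B * sum h C = (\<Sum>a\<in>A. \<Sum>b\<in>B. \<Sum>c\<in>C. K * f a * g b * h c)" for K :: complex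
proof -
  have "K * sum f A * sum g B * sum h C = (\<Sum>a\<in>A. \<Sum>b\<in>B. K * f a * g b) * sum h C"
    by (simp only: prod2sum)
  also have "\<dots> = (\<Sum>a\<in>A. \<Sum>b\<in>B. K * f a * g b * sum h C)" by (simp add: sum_distrib_right)
  also have "\<dots> = (\<Sum>a\<in>A. \<Sum>b\<in>B. \<Sum>c\<in>C. K * f a * g b * h c)" by (simp add: sum_distrib_left)
  finally show ?thesis .
qed

lemma tri:
  fixes S :: "nat list \<Rightarrow> complex" and g :: "nat \<Rightarrow> nat list \<Rightarrow> complex"
  assumes S: "\<And>a. a \<in> idx4 \<Longrightarrow> S a = (\<Sum>r<6. g r a) / 6"
  shows "(\<Sum>a\<in>idx4. \<Sum>b\<in>idx4. \<Sum>c\<in>idx4. P a b c * S a * S b * S c)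
    = (\<Sum>r<6. \<Sum>s<6. \<Sum>t<6. \<Sum>a\<in>idx4. \<Sum>b\<in>idx4. \<Sum>c\<in>idx4. P a b c * g r a * g s b * g t c) / 216"
proof -
  have pw: "P a b c * S a * S b * S c = (\<Sum>r<6. \<Sum>s<6. \<Sum>t<6. P a b c * g r a * g s b * g t c) / 216"
    if "a \<in> idx4" "b \<in> idx4" "c \<in> idx4" for a b c
  proof -
    have "P a b c * S a * S b * S c = (P a b c * (\<Sum>r<6. g r a) * (\<Sum>r<6. g r b) * (\<Sum>r<6. g r c)) / 216"
      unfolding S[OF that(1)] S[OF that(2)] S[OF that(3)] by (simp add: field_simps)
    then show ?thesis by (simp only: prod3sum)
  qed
  have "(\<Sum>a\<in>idx4. \<Sum>b\<in>idx4. \<Sum>c\<in>idx4. P a b c * S a * S b * S c)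
     = (\<Sum>a\<in>idx4. \<Sum>b\<in>idx4. \<Sum>c\<in>idx4. (\<Sum>r<6. \<Sum>s<6. \<Sum>t<6. P a b c * g r a * g s b * g t c) / 216)"
    by (intro sum.cong refl pw)
  also have "\<dots> = (\<Sum>a\<in>idx4. \<Sum>b\<in>idx4. \<Sum>c\<in>idx4. \<Sum>r<6. \<Sum>s<6. \<Sum>t<6. P a b c * g r a * g s b * g t c) / 216"
    by (simp add: sum_divide_distrib)
  also have "(\<Sum>a\<in>idx4. \<Sum>b\<in>idx4. \<Sum>c\<in>idx4. \<Sum>r<6. \<Sum>s<6. \<Sum>t<6. P a b c * g r a * g s b * g t c)
     = (\<Sum>r<6. \<Sum>a\<in>idx4. \<Sum>b\<in>idx4. \<Sum>c\<in>idx4. \<Sum>s<6. \<Sum>t<6. P a b c * g r a * g s b * g t c)"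
    by (rule mv3[symmetric])
  also have "\<dots> = (\<Sum>r<6. \<Sum>s<6. \<Sum>a\<in>idx4. \<Sum>b\<in>idx4. \<Sum>c\<in>idx4. \<Sum>t<6. P a b c * g r a * g s b * g t c)"
    by (rule sum.cong[OF refl], rule mv3[symmetric])
  also have "\<dots> = (\<Sum>r<6. \<Sum>s<6. \<Sum>t<6. \<Sum>a\<in>idx4. \<Sum>b\<in>idx4. \<Sum>c\<in>idx4. P a b c * g r a * g s b * g t c)"
    by (rule sum.cong[OF refl], rule sum.cong[OF refl], rule mv3[symmetric])
  finally show ?thesis .
qed

lemma Ee_rep: "Ee v v z = 0" "Ee v z v = 0" "Ee z v v = 0"
  unfolding Ee_def by (simp_all add: sum3 eps_def algebra_simps)

lemma Dd_rep: "Dd u v v = 0" "Dd u w v = - Dd u v w"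
  unfolding Dd_def dU_def by (simp_all add: sum3 eps_def algebra_simps)

lemma symb_eval_U:
  assumes "\<forall>x. quartic_eval F x = (lin L1 x * lin L2 x)^2"
  shows "symb_eval F P = (\<Sum>r<6. \<Sum>s<6. \<Sum>t<6. \<Sum>a\<in>idx4. \<Sum>b\<in>idx4. \<Sum>c\<in>idx4.
      P a b c * R (Varr L1 L2 r) a * R (Varr L1 L2 s) b * R (Varr L1 L2 t) c) / 216"
  unfolding symb_eval_def by (rule tri) (simp add: symbF[OF assms] U_def)

lemma fwd5: assumes "\<forall>x. quartic_eval F x = (lin L1 x * lin L2 x)^2" shows "conc5 F = 0"
  unfolding conc5_def symb_eval_U[OF assms] K5
  by (simp add: sum6 Varr_def pats_def Ee_rep)

lemma fwd2: assumes "\<forall>x. quartic_eval F x = (lin L1 x * lin L2 x)^2" shows "conc2 F x u = 0"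
  unfolding conc2_def symb_eval_U[OF assms] K2
  by (simp add: sum6 Varr_def pats_def Ee_rep)

lemma fwd3: assumes "\<forall>x. quartic_eval F x = (lin L1 x * lin L2 x)^2" shows "conc3 F x u = 0"
  unfolding conc3_def symb_eval_U[OF assms] K3
  by (simp add: sum6 Varr_def pats_def Ee_rep)

lemma fwd4: assumes "\<forall>x. quartic_eval F x = (lin L1 x * lin L2 x)^2" shows "conc4 F x u = 0"
  unfolding conc4_def symb_eval_U[OF assms] K4
  by (simp add: sum6 Varr_def pats_def Ee_rep)

lemma fwd1: assumes "\<forall>x. quartic_eval F x = (lin L1 x * lin L2 x)^2" shows "conc1 F x u = 0"
proof -
  define V where "V = Varr L1 L2"
  define \<alpha> where "\<alpha> r t = dot (V r 0) x * dot (V r 1) x * Dd u (V r 2) (V t 1) * Dd u (V r 3) (V t 2)" for r t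
  define \<beta> where "\<beta> s t = dot (V s 0) x * dot (V s 1) x * dot (V s 2) x * Dd u (V s 3) (V t 3)" for s t
  define A where "A = dot L1 x"
  define B where "B = dot L2 x"
  define D where "D = Dd u L1 L2"
  have e1: "conc1 F x u = (\<Sum>r<6. \<Sum>s<6. \<Sum>t<6. dot (V r 0) x * dot (V r 1) x * dot (V s 0) x * dot (V s 1) x * dot (V s 2) x * dot (V t 0) x
    * Dd u (V r 2) (V t 1) * Dd u (V r 3) (V t 2) * Dd u (V s 3) (V t 3)) / 216"
    unfolding conc1_def symb_eval_U[OF assms] K1 V_def by (rule refl)
  have e2: "(\<Sum>r<6. \<Sum>s<6. \<Sum>t<6. dot (V r 0) x * dot (V r 1) x * dot (V s 0) x * dot (V s 1) x * dot (V s 2) x * dot (V t 0) x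
    * Dd u (V r 2) (V t 1) * Dd u (V r 3) (V t 2) * Dd u (V s 3) (V t 3))
    = (\<Sum>t<6. \<Sum>r<6. \<Sum>s<6. dot (V r 0) x * dot (V r 1) x * dot (V s 0) x * dot (V s 1) x * dot (V s 2) x * dot (V t 0) x
    * Dd u (V r 2) (V t 1) * Dd u (V r 3) (V t 2) * Dd u (V s 3) (V t 3))"
    by (rule swap_abc)
  have e3: "(\<Sum>t<6. \<Sum>r<6. \<Sum>s<6. dot (V r 0) x * dot (V r 1) x * dot (V s 0) x * dot (V s 1) x * dot (V s 2) x * dot (V t 0) x
    * Dd u (V r 2) (V t 1) * Dd u (V r 3) (V t 2) * Dd u (V s 3) (V t 3))
    = (\<Sum>t<6. dot (V t 0) x * sum (\<lambda>r. \<alpha> r t) {..<6} * sum (\<lambda>s. \<beta> s t) {..<6})"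
    unfolding prod2sum \<alpha>_def \<beta>_def by (intro sum.cong refl) (simp add: mult_ac)
  have a0: "sum (\<lambda>r. \<alpha> r 0) {..<6} = -2*A*B*D^2"
    unfolding \<alpha>_def A_def B_def D_def V_def by (simp add: sum6 Varr_def pats_def Dd_rep(1) Dd_rep(2)[of u L2 L1] algebra_simps power2_eq_square)
  have b0: "sum (\<lambda>s. \<beta> s 0) {..<6} = 3*A*B^2*D"
    unfolding \<beta>_def A_def B_def D_def V_def by (simp add: sum6 Varr_def pats_def Dd_rep(1) Dd_rep(2)[of u L2 L1] algebra_simps power2_eq_square)
  have a1: "sum (\<lambda>r. \<alpha> r 1) {..<6} = -2*A*B*D^2"
    unfolding \<alpha>_def A_def B_def D_def V_def by (simp add: sum6 Varr_def pats_def Dd_rep(1) Dd_rep(2)[of u L2 L1] algebra_simps power2_eq_square)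
  have b1: "sum (\<lambda>s. \<beta> s 1) {..<6} = 3*A*B^2*D"
    unfolding \<beta>_def A_def B_def D_def V_def by (simp add: sum6 Varr_def pats_def Dd_rep(1) Dd_rep(2)[of u L2 L1] algebra_simps power2_eq_square)
  have a2: "sum (\<lambda>r. \<alpha> r 2) {..<6} = B^2*D^2"
    unfolding \<alpha>_def A_def B_def D_def V_def by (simp add: sum6 Varr_def pats_def Dd_rep(1) Dd_rep(2)[of u L2 L1] algebra_simps power2_eq_square)
  have b2: "sum (\<lambda>s. \<beta> s 2) {..<6} = -3*A^2*B*D"
    unfolding \<beta>_def A_def B_def D_def V_def by (simp add: sum6 Varr_def pats_def Dd_rep(1) Dd_rep(2)[of u L2 L1] algebra_simps power2_eq_square)
  have a3: "sum (\<lambda>r. \<alpha> r 3) {..<6} = A^2*D^2"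
    unfolding \<alpha>_def A_def B_def D_def V_def by (simp add: sum6 Varr_def pats_def Dd_rep(1) Dd_rep(2)[of u L2 L1] algebra_simps power2_eq_square)
  have b3: "sum (\<lambda>s. \<beta> s 3) {..<6} = 3*A*B^2*D"
    unfolding \<beta>_def A_def B_def D_def V_def by (simp add: sum6 Varr_def pats_def Dd_rep(1) Dd_rep(2)[of u L2 L1] algebra_simps power2_eq_square)
  have a4: "sum (\<lambda>r. \<alpha> r 4) {..<6} = -2*A*B*D^2"
    unfolding \<alpha>_def A_def B_def D_def V_def by (simp add: sum6 Varr_def pats_def Dd_rep(1) Dd_rep(2)[of u L2 L1] algebra_simps power2_eq_square)
  have b4: "sum (\<lambda>s. \<beta> s 4) {..<6} = -3*A^2*B*D"
    unfolding \<beta>_def A_def B_def D_def V_def by (simp add: sum6 Varr_def pats_def Dd_rep(1) Dd_rep(2)[of u L2 L1] algebra_simps power2_eq_square)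
  have a5: "sum (\<lambda>r. \<alpha> r 5) {..<6} = -2*A*B*D^2"
    unfolding \<alpha>_def A_def B_def D_def V_def by (simp add: sum6 Varr_def pats_def Dd_rep(1) Dd_rep(2)[of u L2 L1] algebra_simps power2_eq_square)
  have b5: "sum (\<lambda>s. \<beta> s 5) {..<6} = -3*A^2*B*D"
    unfolding \<beta>_def A_def B_def D_def V_def by (simp add: sum6 Varr_def pats_def Dd_rep(1) Dd_rep(2)[of u L2 L1] algebra_simps power2_eq_square)
  have v: "dot (V 0 0) x = A" "dot (V 1 0) x = A" "dot (V 2 0) x = A" "dot (V 3 0) x = B" "dot (V 4 0) x = B" "dot (V 5 0) x = B"
    unfolding V_def A_def B_def by (simp_all add: Varr_def pats_def)
  have e4: "(\<Sum>t<6. dot (V t 0) x * sum (\<lambda>r. \<alpha> r t) {..<6} * sum (\<lambda>s. \<beta> s t) {..<6}) = 0"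
    unfolding sum6[of "\<lambda>t. dot (V t 0) x * sum (\<lambda>r. \<alpha> r t) {..<6} * sum (\<lambda>s. \<beta> s t) {..<6}"]
      a0 a1 a2 a3 a4 a5 b0 b1 b2 b3 b4 b5 v
    by (simp add: algebra_simps power2_eq_square)
  show ?thesis using e1 e2 e3 e4 by simp
qed

theorem mainTheorem7:
  fixes F :: "nat \<Rightarrow> nat \<Rightarrow> nat \<Rightarrow> complex"
  shows "(\<exists>L1 L2 :: nat \<Rightarrow> complex. \<forall>x. quartic_eval F x = (lin L1 x * lin L2 x) ^ 2)
    \<longleftrightarrow> ((\<forall>x u. conc1 F x u = 0) \<and> (\<forall>x u. conc2 F x u = 0) \<and> (\<forall>x u. conc3 F x u = 0)
         \<and> (\<forall>x u. conc4 F x u = 0) \<and> conc5 F = 0)"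
proof
  assume "\<exists>L1 L2 :: nat \<Rightarrow> complex. \<forall>x. quartic_eval F x = (lin L1 x * lin L2 x) ^ 2"
  then obtain L1 L2 where h: "\<forall>x. quartic_eval F x = (lin L1 x * lin L2 x) ^ 2" by blast
  show "(\<forall>x u. conc1 F x u = 0) \<and> (\<forall>x u. conc2 F x u = 0) \<and> (\<forall>x u. conc3 F x u = 0)
         \<and> (\<forall>x u. conc4 F x u = 0) \<and> conc5 F = 0"
    using fwd1[OF h] fwd2[OF h] fwd3[OF h] fwd4[OF h] fwd5[OF h] by blast
next
  assume "(\<forall>x u. conc1 F x u = 0) \<and> (\<forall>x u. conc2 F x u = 0) \<and> (\<forall>x u. conc3 F x u = 0)
         \<and> (\<forall>x u. conc4 F x u = 0) \<and> conc5 F = 0"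
  then show "\<exists>L1 L2 :: nat \<Rightarrow> complex. \<forall>x. quartic_eval F x = (lin L1 x * lin L2 x) ^ 2"
    using converse by blast
qed

end
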